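(* Let $\Omega_n=\dfrac{\pi^{n/2}}{\Gamma\left(\frac n2+1\right)}$ for $n\in\mathbb{N}_0$, and \[ \varepsilon_1(n)=-\frac{\frac14\pi-4\pi^2+8\pi^3}{n^3},\qquad \varepsilon_2(n)=\varepsilon_1(n)+\frac{\frac38\pi-7\pi^2-12\pi^3+64\pi^4}{n^4}. \] Then for every $n\in\mathbb{N}$, \[ \sqrt{\frac{2\pi}{n+4\pi+\frac12}+\varepsilon_1(n)}<\frac{\Omega_n}{\Omega_{n-1}+\Omega_{n+1}}<\sqrt{\frac{2\pi}{n+4\pi+\frac12}+\varepsilon_2(n)}. \]
   Context: $\Omega_n$ is the volume of the unit ball in $\mathbb{R}^n$ ($\Omega_0=1$); $\Gamma$ is Euler's gamma function. *)

theory Defs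
  imports "HOL-Analysis.Analysis"
begin

text \<open>Volume of the unit ball in R^n: Omega n = pi^(n/2) / Gamma(n/2 + 1).\<close>
definition Omega :: "nat \<Rightarrow> real" where
  "Omega n = pi powr (real n / 2) / Gamma (real n / 2 + 1)"

definition eps1 :: "nat \<Rightarrow> real" where
  "eps1 n = - ((1/4) * pi - 4 * pi^2 + 8 * pi^3) / real n ^ 3"

definition eps2 :: "nat \<Rightarrow> real" where
  "eps2 n = eps1 n + ((3/8) * pi - 7 * pi^2 - 12 * pi^3 + 64 * pi^4) / real n ^ 4"

end

theory Submission imports Defs "HOL-Real_Asymp.Real_Asymp" begin
lemma pow_bounds:
  fixes p :: real
  assumes pl: "314159/100000 \<le> p" and pu: "p \<le> 31416/10000"
  shows
   "(98695877281/10000000000) \<le> p^2" "p^2 \<le> (15421329/1562500)"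
   "(31006198110721679/1000000000000000) \<le> p^3" "p^3 \<le> (60559558983/1953125000)"
   "(9740876192266211952961/100000000000000000000) \<le> p^4" "p^4 \<le> (237817388126241/2441406250000)"
   "(3060183923686160880930274799/10000000000000000000000000) \<le> p^5" "p^5 \<le> (933908883171748407/3051757812500000)"
   "(961384321281320616192174200579041/1000000000000000000000000000000) \<le> p^6" "p^6 \<le> (3667460184215455994289/3814697265625000000)"
   "(302027536989418403462317254679710941519/100000000000000000000000000000000000) \<le> p^7" "p^7 \<le> (14402116143414095689572903/4768371582031250000000)"
   "(94884668993058696213318126412923309676667521/10000000000000000000000000000000000000000) \<le> p^8" "p^8 \<le> (56557110095187153772952790081/5960464477539062500000000)"
proof -
  have p0: "0 \<le> (314159/100000::real)" by simp
  show "(98695877281/10000000000) \<le> p^2" using power_mono[OF pl p0, of 2] by (simp only: power_divide) simp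
  show "p^2 \<le> (15421329/1562500)" using power_mono[OF pu, of 2] pl by (simp only: power_divide) simp
  show "(31006198110721679/1000000000000000) \<le> p^3" using power_mono[OF pl p0, of 3] by (simp only: power_divide) simp
  show "p^3 \<le> (60559558983/1953125000)" using power_mono[OF pu, of 3] pl by (simp only: power_divide) simp
  show "(9740876192266211952961/100000000000000000000) \<le> p^4" using power_mono[OF pl p0, of 4] by (simp only: power_divide) simp
  show "p^4 \<le> (237817388126241/2441406250000)" using power_mono[OF pu, of 4] pl by (simp only: power_divide) simp
  show "(3060183923686160880930274799/10000000000000000000000000) \<le> p^5" using power_mono[OF pl p0, of 5] by (simp only: power_divide) simp
  show "p^5 \<le> (933908883171748407/3051757812500000)" using power_mono[OF pu, of 5] pl by (simp only: power_divide) simp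
  show "(961384321281320616192174200579041/1000000000000000000000000000000) \<le> p^6" using power_mono[OF pl p0, of 6] by (simp only: power_divide) simp
  show "p^6 \<le> (3667460184215455994289/3814697265625000000)" using power_mono[OF pu, of 6] pl by (simp only: power_divide) simp
  show "(302027536989418403462317254679710941519/100000000000000000000000000000000000) \<le> p^7" using power_mono[OF pl p0, of 7] by (simp only: power_divide) simp
  show "p^7 \<le> (14402116143414095689572903/4768371582031250000000)" using power_mono[OF pu, of 7] pl by (simp only: power_divide) simp
  show "(94884668993058696213318126412923309676667521/10000000000000000000000000000000000000000) \<le> p^8" using power_mono[OF pl p0, of 8] by (simp only: power_divide) simp
  show "p^8 \<le> (56557110095187153772952790081/5960464477539062500000000)" using power_mono[OF pu, of 8] pl by (simp only: power_divide) simp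
qed

definition numL :: "real \<Rightarrow> real \<Rightarrow> real" where
  "numL p m = 2*p*m^3 - (1/4*p - 4*p^2 + 8*p^3)*(m+4*p+1/2)"
definition denL :: "real \<Rightarrow> real \<Rightarrow> real" where
  "denL p m = m^3*(m+4*p+1/2)"
definition numU :: "real \<Rightarrow> real \<Rightarrow> real" where
  "numU p m = 2*p*m^4 - (1/4*p - 4*p^2 + 8*p^3)*m*(m+4*p+1/2) + (3/8*p - 7*p^2 - 12*p^3 + 64*p^4)*(m+4*p+1/2)"
definition denU :: "real \<Rightarrow> real \<Rightarrow> real" where
  "denU p m = m^4*(m+4*p+1/2)"

lemma numL_pos:
  fixes m p :: real
  assumes m: "10 \<le> m" and pl: "314159/100000 \<le> p" and pu: "p \<le> 31416/10000"
  shows "0 < numL p m"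
proof -
  define t where "t = m - 10"
  have t0: "0 \<le> t" and mt: "m = t + 10" using m by (simp_all add: t_def)
  note pb = pow_bounds[OF pl pu]
  define c0 where "c0 = ((15979/8)*p + (41)*p^2 + (-(68))*p^3 + (-(32))*p^4)"
  have h0: "0 < c0" unfolding c0_def using pl pu pb by linarith
  define c1 where "c1 = ((2399/4)*p + (4)*p^2 + (-(8))*p^3)"
  have h1: "0 < c1" unfolding c1_def using pl pu pb by linarith
  define c2 where "c2 = ((60)*p)"
  have h2: "0 < c2" unfolding c2_def using pl pu pb by linarith
  define c3 where "c3 = ((2)*p)"
  have h3: "0 < c3" unfolding c3_def using pl pu pb by linarith
  have e: "numL p m = c0 + c1*t^1 + c2*t^2 + c3*t^3"
    unfolding mt c0_def c1_def c2_def c3_def numL_def denL_def numU_def denU_def by algebra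
  have g1: "0 \<le> c1*t^1" using h1 t0 by simp
  have g2: "0 \<le> c2*t^2" using h2 t0 by simp
  have g3: "0 \<le> c3*t^3" using h3 t0 by simp
  show ?thesis unfolding e using h0 g1 g2 g3 by linarith
qed

lemma numU_pos:
  fixes m p :: real
  assumes m: "1 \<le> m" and pl: "314159/100000 \<le> p" and pu: "p \<le> 31416/10000"
  shows "0 < numU p m"
proof -
  define t where "t = m - 1"
  have t0: "0 \<le> t" and mt: "m = t + 1" using m by (simp_all add: t_def)
  note pb = pow_bounds[OF pl pu]
  define c0 where "c0 = ((-(6237/16))*p + (-(4))*p^2 + (-(42))*p^3 + (16)*p^4 + (256)*p^5)"
  have h0: "0 < c0" unfolding c0_def using pl pu pb by linarith
  define c1 where "c1 = ((31/4)*p + (2)*p^2 + (-(16))*p^3 + (32)*p^4)"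
  have h1: "0 < c1" unfolding c1_def using pl pu pb by linarith
  define c2 where "c2 = ((271/4)*p + (4)*p^2 + (-(8))*p^3)"
  have h2: "0 < c2" unfolding c2_def using pl pu pb by linarith
  define c3 where "c3 = ((8)*p)"
  have h3: "0 < c3" unfolding c3_def using pl pu pb by linarith
  have e: "numU p m = c0 + c1*t^1 + c2*t^2 + c3*t^3 + 2*p*(t^2-14)^2"
    unfolding mt c0_def c1_def c2_def c3_def numL_def denL_def numU_def denU_def by algebra
  have g1: "0 \<le> c1*t^1" using h1 t0 by simp
  have g2: "0 \<le> c2*t^2" using h2 t0 by simp
  have g3: "0 \<le> c3*t^3" using h3 t0 by simp
  have x0: "0 \<le> 2*p*(t^2-14)^2" using pl by simp
  show ?thesis unfolding e using h0 g1 g2 g3 x0 by linarith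
qed

lemma condL:
  fixes m p :: real
  assumes m: "10 \<le> m" and pl: "314159/100000 \<le> p" and pu: "p \<le> 31416/10000"
  shows "0 < numL p (m+2)*denL p m*(m+3+2*p)^2*(m+2)^2 - numL p m*denL p (m+2)*(m+1+2*p)^2*(m+3)^2"
proof -
  define t where "t = m - 10"
  have t0: "0 \<le> t" and mt: "m = t + 10" using m by (simp_all add: t_def)
  note pb = pow_bounds[OF pl pu]
  define c0 where "c0 = ((68901300)*p + (-(1122782544))*p^2 + (-(2708549424))*p^3 + (9390191616)*p^4 + (5417049600)*p^5 + (1084170240)*p^6 + (75792384)*p^7)"
  have h0: "0 < c0" unfolding c0_def using pl pu pb by linarith
  define c1 where "c1 = ((41262039)*p + (-(685323804))*p^2 + (-(1580729604))*p^3 + (5820941568)*p^4 + (2825210496)*p^5 + (466999296)*p^6 + (25976832)*p^7)"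
  have h1: "0 < c1" unfolding c1_def using pl pu pb by linarith
  define c2 where "c2 = ((42305187/4)*p + (-(179064143))*p^2 + (-(394474933))*p^3 + (1543006400)*p^4 + (613356320)*p^5 + (80424448)*p^6 + (3340288)*p^7)"
  have h2: "0 < c2" unfolding c2_def using pl pu pb by linarith
  define c3 where "c3 = ((24066129/16)*p + (-(103849145/4))*p^2 + (-(218241735/4))*p^3 + (226750064)*p^4 + (70952088)*p^5 + (6921856)*p^6 + (190976)*p^7)"
  have h3: "0 < c3" unfolding c3_def using pl pu pb by linarith
  define c4 where "c4 = ((1025483/8)*p + (-(9023751/4))*p^2 + (-(4516499))*p^3 + (19952464)*p^4 + (4612512)*p^5 + (297728)*p^6 + (4096)*p^7)"
  have h4: "0 < c4" unfolding c4_def using pl pu pb by linarith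
  define c5 where "c5 = ((104741/16)*p + (-(234961/2))*p^2 + (-(223733))*p^3 + (1051360)*p^4 + (159776)*p^5 + (5120)*p^6)"
  have h5: "0 < c5" unfolding c5_def using pl pu pb by linarith
  define c6 where "c6 = ((371/2)*p + (-(3395))*p^2 + (-(6140))*p^3 + (30720)*p^4 + (2304)*p^5)"
  have h6: "0 < c6" unfolding c6_def using pl pu pb by linarith
  define c7 where "c7 = ((9/4)*p + (-(42))*p^2 + (-(72))*p^3 + (384)*p^4)"
  have h7: "0 < c7" unfolding c7_def using pl pu pb by linarith
  have e: "numL p (m+2)*denL p m*(m+3+2*p)^2*(m+2)^2 - numL p m*denL p (m+2)*(m+1+2*p)^2*(m+3)^2 = c0 + c1*t^1 + c2*t^2 + c3*t^3 + c4*t^4 + c5*t^5 + c6*t^6 + c7*t^7"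
    unfolding mt c0_def c1_def c2_def c3_def c4_def c5_def c6_def c7_def numL_def denL_def numU_def denU_def by algebra
  have g1: "0 \<le> c1*t^1" using h1 t0 by simp
  have g2: "0 \<le> c2*t^2" using h2 t0 by simp
  have g3: "0 \<le> c3*t^3" using h3 t0 by simp
  have g4: "0 \<le> c4*t^4" using h4 t0 by simp
  have g5: "0 \<le> c5*t^5" using h5 t0 by simp
  have g6: "0 \<le> c6*t^6" using h6 t0 by simp
  have g7: "0 \<le> c7*t^7" using h7 t0 by simp
  show ?thesis unfolding e using h0 g1 g2 g3 g4 g5 g6 g7 by linarith
qed

lemma condU:
  fixes m p :: real
  assumes m: "1 \<le> m" and pl: "314159/100000 \<le> p" and pu: "p \<le> 31416/10000"
  shows "numU p (m+2)*denU p m*(m+3+2*p)^2*(m+2)^2 - numU p m*denU p (m+2)*(m+1+2*p)^2*(m+3)^2 < 0"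
proof -
  define t where "t = m - 1"
  have t0: "0 \<le> t" and mt: "m = t + 1" using m by (simp_all add: t_def)
  note pb = pow_bounds[OF pl pu]
  define c0 where "c0 = ((-(9963/2))*p + (157113/2)*p^2 + (7605945/8)*p^3 + (2264355)*p^4 + (-(2916252))*p^5 + (-(14443200))*p^6 + (-(15420672))*p^7 + (-(5271552))*p^8)"
  have h0: "c0 < 0" unfolding c0_def using pl pu pb by linarith
  define c1 where "c1 = ((-(62235/4))*p + (2222793/8)*p^2 + (5968713/2)*p^3 + (5889906)*p^4 + (-(11694624))*p^5 + (-(40251264))*p^6 + (-(35030016))*p^7 + (-(9560064))*p^8)"
  have h1: "c1 < 0" unfolding c1_def using pl pu pb by linarith
  define c2 where "c2 = ((-(664587/32))*p + (839739/2)*p^2 + (16245769/4)*p^3 + (6468366)*p^4 + (-(18749368))*p^5 + (-(47752576))*p^6 + (-(33394176))*p^7 + (-(7086080))*p^8)"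
  have h2: "c2 < 0" unfolding c2_def using pl pu pb by linarith
  define c3 where "c3 = ((-(62049/4))*p + (1421261/4)*p^2 + (6262055/2)*p^3 + (3846896)*p^4 + (-(16275312))*p^5 + (-(31300096))*p^6 + (-(17091584))*p^7 + (-(2686976))*p^8)"
  have h3: "c3 < 0" unfolding c3_def using pl pu pb by linarith
  define c4 where "c4 = ((-(113835/16))*p + (184678)*p^2 + (11961217/8)*p^3 + (1304035)*p^4 + (-(8504892))*p^5 + (-(12239552))*p^6 + (-(4943104))*p^7 + (-(520192))*p^8)"
  have h4: "c4 < 0" unfolding c4_def using pl pu pb by linarith
  define c5 where "c5 = ((-(16465/8))*p + (483825/8)*p^2 + (452525)*p^3 + (233134)*p^4 + (-(2760848))*p^5 + (-(2852480))*p^6 + (-(763904))*p^7 + (-(40960))*p^8)"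
  have h5: "c5 < 0" unfolding c5_def using pl pu pb by linarith
  define c6 where "c6 = ((-(11763/32))*p + (12199)*p^2 + (169359/2)*p^3 + (12756)*p^4 + (-(545488))*p^5 + (-(366336))*p^6 + (-(49152))*p^7)"
  have h6: "c6 < 0" unfolding c6_def using pl pu pb by linarith
  define c7 where "c7 = ((-(297/8))*p + (2773/2)*p^2 + (8946)*p^3 + (-(2040))*p^4 + (-(60032))*p^5 + (-(19968))*p^6)"
  have h7: "c7 < 0" unfolding c7_def using pl pu pb by linarith
  define c8 where "c8 = ((-(13/8))*p + (68)*p^2 + (408)*p^3 + (-(256))*p^4 + (-(2816))*p^5)"
  have h8: "c8 < 0" unfolding c8_def using pl pu pb by linarith
  have e: "numU p (m+2)*denU p m*(m+3+2*p)^2*(m+2)^2 - numU p m*denU p (m+2)*(m+1+2*p)^2*(m+3)^2 = c0 + c1*t^1 + c2*t^2 + c3*t^3 + c4*t^4 + c5*t^5 + c6*t^6 + c7*t^7 + c8*t^8"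
    unfolding mt c0_def c1_def c2_def c3_def c4_def c5_def c6_def c7_def c8_def numL_def denL_def numU_def denU_def by algebra
  have g1: "c1*t^1 \<le> 0" using h1 t0 using mult_nonpos_nonneg[of "c1" "t^1"] by simp
  have g2: "c2*t^2 \<le> 0" using h2 t0 using mult_nonpos_nonneg[of "c2" "t^2"] by simp
  have g3: "c3*t^3 \<le> 0" using h3 t0 using mult_nonpos_nonneg[of "c3" "t^3"] by simp
  have g4: "c4*t^4 \<le> 0" using h4 t0 using mult_nonpos_nonneg[of "c4" "t^4"] by simp
  have g5: "c5*t^5 \<le> 0" using h5 t0 using mult_nonpos_nonneg[of "c5" "t^5"] by simp
  have g6: "c6*t^6 \<le> 0" using h6 t0 using mult_nonpos_nonneg[of "c6" "t^6"] by simp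
  have g7: "c7*t^7 \<le> 0" using h7 t0 using mult_nonpos_nonneg[of "c7" "t^7"] by simp
  have g8: "c8*t^8 \<le> 0" using h8 t0 using mult_nonpos_nonneg[of "c8" "t^8"] by simp
  show ?thesis unfolding e using h0 g1 g2 g3 g4 g5 g6 g7 g8 by linarith
qed

lemma numL_small:
  fixes p :: real
  assumes pl: "314159/100000 \<le> p" and pu: "p \<le> 31416/10000" and k: "1 \<le> k" "k \<le> (9::nat)"
  shows "numL p (real k) < 0"
proof -
  note pb = pow_bounds[OF pl pu]
  have "numL p m = ((13/8)*p + (5)*p^2 + (4)*p^3 + (-(32))*p^4)" if "m = 1" for m unfolding numL_def that by (simp add: algebra_simps eval_nat_numeral)
  hence "numL p 1 = ((13/8)*p + (5)*p^2 + (4)*p^3 + (-(32))*p^4)" by simp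
  hence n1: "numL p 1 < 0" using pl pu pb by linarith
  have "numL p m = ((123/8)*p + (9)*p^2 + (-(4))*p^3 + (-(32))*p^4)" if "m = 2" for m unfolding numL_def that by (simp add: algebra_simps eval_nat_numeral)
  hence "numL p 2 = ((123/8)*p + (9)*p^2 + (-(4))*p^3 + (-(32))*p^4)" by simp
  hence n2: "numL p 2 < 0" using pl pu pb by linarith
  have "numL p m = ((425/8)*p + (13)*p^2 + (-(12))*p^3 + (-(32))*p^4)" if "m = 3" for m unfolding numL_def that by (simp add: algebra_simps eval_nat_numeral)
  hence "numL p 3 = ((425/8)*p + (13)*p^2 + (-(12))*p^3 + (-(32))*p^4)" by simp
  hence n3: "numL p 3 < 0" using pl pu pb by linarith
  have "numL p m = ((1015/8)*p + (17)*p^2 + (-(20))*p^3 + (-(32))*p^4)" if "m = 4" for m unfolding numL_def that by (simp add: algebra_simps eval_nat_numeral)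
  hence "numL p 4 = ((1015/8)*p + (17)*p^2 + (-(20))*p^3 + (-(32))*p^4)" by simp
  hence n4: "numL p 4 < 0" using pl pu pb by linarith
  have "numL p m = ((1989/8)*p + (21)*p^2 + (-(28))*p^3 + (-(32))*p^4)" if "m = 5" for m unfolding numL_def that by (simp add: algebra_simps eval_nat_numeral)
  hence "numL p 5 = ((1989/8)*p + (21)*p^2 + (-(28))*p^3 + (-(32))*p^4)" by simp
  hence n5: "numL p 5 < 0" using pl pu pb by linarith
  have "numL p m = ((3443/8)*p + (25)*p^2 + (-(36))*p^3 + (-(32))*p^4)" if "m = 6" for m unfolding numL_def that by (simp add: algebra_simps eval_nat_numeral)
  hence "numL p 6 = ((3443/8)*p + (25)*p^2 + (-(36))*p^3 + (-(32))*p^4)" by simp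
  hence n6: "numL p 6 < 0" using pl pu pb by linarith
  have "numL p m = ((5473/8)*p + (29)*p^2 + (-(44))*p^3 + (-(32))*p^4)" if "m = 7" for m unfolding numL_def that by (simp add: algebra_simps eval_nat_numeral)
  hence "numL p 7 = ((5473/8)*p + (29)*p^2 + (-(44))*p^3 + (-(32))*p^4)" by simp
  hence n7: "numL p 7 < 0" using pl pu pb by linarith
  have "numL p m = ((8175/8)*p + (33)*p^2 + (-(52))*p^3 + (-(32))*p^4)" if "m = 8" for m unfolding numL_def that by (simp add: algebra_simps eval_nat_numeral)
  hence "numL p 8 = ((8175/8)*p + (33)*p^2 + (-(52))*p^3 + (-(32))*p^4)" by simp
  hence n8: "numL p 8 < 0" using pl pu pb by linarith
  have "numL p m = ((11645/8)*p + (37)*p^2 + (-(60))*p^3 + (-(32))*p^4)" if "m = 9" for m unfolding numL_def that by (simp add: algebra_simps eval_nat_numeral)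
  hence "numL p 9 = ((11645/8)*p + (37)*p^2 + (-(60))*p^3 + (-(32))*p^4)" by simp
  hence n9: "numL p 9 < 0" using pl pu pb by linarith
  from k have "k \<in> {1,2,3,4,5,6,7,8,9}" by auto
  thus ?thesis using n1 n2 n3 n4 n5 n6 n7 n8 n9 by auto
qed
lemma Omega_pos: "Omega n > 0"
  unfolding Omega_def by (intro divide_pos_pos) auto

lemma Gamma_plus1_pos: "(x::real) > 0 \<Longrightarrow> Gamma (x + 1) = x * Gamma x"
  by (rule Gamma_plus1) (auto dest: nonpos_Ints_nonpos)

lemma Omega_rec: "Omega (n+2) = 2*pi/(real n+2) * Omega n"
proof -
  have a: "real (n+2)/2 + 1 = (real n/2+1) + 1" by simp
  have g: "Gamma (real (n+2)/2 + 1) = (real n/2+1) * Gamma (real n/2+1)"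
    unfolding a by (rule Gamma_plus1_pos) simp
  have b: "real (n+2)/2 = real n/2 + 1" by simp
  have pw: "pi powr (real (n+2)/2) = pi powr (real n/2) * pi"
    unfolding b by (simp add: powr_add)
  have gp: "Gamma (real n/2+1) > 0" by simp
  have c: "real n/2+1 = (real n+2)/2" by simp
  have aux: "\<And>P G c. G > 0 \<Longrightarrow> c > 0 \<Longrightarrow> P * pi / (c/2 * G) = 2*pi/c * (P/G)"
    by (simp add: field_simps)
  show ?thesis unfolding Omega_def g pw c by (rule aux) (use gp in auto)
qed

lemma Gamma_logconv: "(a::real) > 0 \<Longrightarrow> Gamma (a + 1/2)^2 \<le> Gamma a * Gamma (a+1)"
proof -
  assume a: "a > 0"
  have l0: "(ln \<circ> Gamma) ((1 - 1/2) *\<^sub>R a + (1/2) *\<^sub>R (a+1)) \<le> (1 - 1/2) * (ln \<circ> Gamma) a + (1/2) * (ln \<circ> Gamma) (a+1)"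
    by (rule convex_onD[OF log_convex_Gamma_real]) (use a in auto)
  have m: "(1 - 1/2) *\<^sub>R a + (1/2) *\<^sub>R (a+1) = a + 1/2"
    by (simp add: add_divide_distrib)
  have l: "2 * ln (Gamma (a + 1/2)) \<le> ln (Gamma a) + ln (Gamma (a+1))"
    using l0 unfolding m comp_def by simp
  have g: "Gamma (a + 1/2) > 0" "Gamma a > 0" "Gamma (a+1) > 0" using a by auto
  have "Gamma (a + 1/2)^2 = exp (ln (Gamma (a + 1/2)) + ln (Gamma (a + 1/2)))"
    using g by (simp only: exp_add exp_ln power2_eq_square)
  also have "\<dots> \<le> exp (ln (Gamma a) + ln (Gamma (a+1)))" using l by simp
  also have "\<dots> = Gamma a * Gamma (a+1)" using g by (simp only: exp_add exp_ln)
  finally show ?thesis .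
qed

lemma Omega_logconv: "Omega n * Omega (n+2) \<le> Omega (n+1)^2"
proof -
  define a where "a = real n/2 + 1"
  have a0: "a > 0" unfolding a_def by simp
  have e1: "real (n+2)/2 + 1 = a + 1" unfolding a_def by simp
  have e2: "real (n+1)/2 + 1 = a + 1/2" unfolding a_def by (simp add: field_simps)
  have e3: "real n/2 + 1 = a" unfolding a_def by simp
  have pw: "pi powr (real n/2) * pi powr (real (n+2)/2) = (pi powr (real (n+1)/2))^2"
  proof -
    have h: "real n/2 + real (n+2)/2 = real (n+1)/2 + real (n+1)/2" by (simp add: field_simps)
    show ?thesis by (simp only: power2_eq_square powr_add[symmetric] h)
  qed
  have G: "Gamma (a + 1/2)^2 \<le> Gamma a * Gamma (a+1)" using Gamma_logconv[OF a0] .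
  have gp: "Gamma (a+1/2) > 0" "Gamma a > 0" "Gamma (a+1) > 0" using a0 by auto
  have "Omega n * Omega (n+2) = (pi powr (real (n+1)/2))^2 / (Gamma a * Gamma (a+1))"
    unfolding Omega_def e1 e3 pw[symmetric] by simp
  also have "\<dots> \<le> (pi powr (real (n+1)/2))^2 / Gamma (a + 1/2)^2"
    by (rule divide_left_mono[OF G]) (use gp in auto)
  also have "\<dots> = Omega (n+1)^2" unfolding Omega_def e2 by (simp add: power_divide)
  finally show ?thesis .
qed

definition ss :: "nat \<Rightarrow> real" where "ss n = (Omega n / Omega (n-1))^2"

lemma ss_pos: "ss n > 0" unfolding ss_def using Omega_pos[of n] Omega_pos[of "n-1"] by simp

lemma Omega_succ: "n \<ge> 1 \<Longrightarrow> Omega (n+1) = 2*pi/(real n+1) * Omega (n-1)"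
  using Omega_rec[of "n-1"] by (simp add: of_nat_diff)

lemma ss_rec: "n \<ge> 1 \<Longrightarrow> ss n * ss (Suc n) = (2*pi/(real n+1))^2"
proof -
  assume n: "n \<ge> 1"
  have q: "Omega n / Omega (n-1) * (Omega (n+1) / Omega n) = Omega (n+1) / Omega (n-1)"
    using Omega_pos[of n] by simp
  have "ss n * ss (Suc n) = (Omega (n+1) / Omega (n-1))^2"
    unfolding ss_def q[symmetric] power_mult_distrib by simp
  also have "\<dots> = (2*pi/(real n+1))^2" using Omega_succ[OF n] Omega_pos[of "n-1"] by simp
  finally show ?thesis .
qed

lemma ss_dec: "n \<ge> 1 \<Longrightarrow> ss (Suc n) \<le> ss n"
proof -
  assume n: "n \<ge> 1"
  have lc: "Omega (n-1) * Omega (n+1) \<le> Omega n ^2" using Omega_logconv[of "n-1"] n by simp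
  have p: "Omega (n-1) > 0" "Omega n > 0" "Omega (n+1) > 0" using Omega_pos by auto
  have "Omega (n+1) / Omega n \<le> Omega n / Omega (n-1)"
    using lc p by (simp add: divide_simps power2_eq_square mult.commute)
  hence "(Omega (n+1) / Omega n)^2 \<le> (Omega n / Omega (n-1))^2"
    by (rule power_mono) (use p in auto)
  thus ?thesis unfolding ss_def by simp
qed

lemma ss_bounds: assumes n: "n \<ge> 1"
  shows "2*pi/(real n+1) \<le> ss n" "ss (Suc n) \<le> 2*pi/(real n+1)"
proof -
  have r: "(2*pi/(real n+1))^2 = ss n * ss (Suc n)" using ss_rec[OF n] by simp
  have d: "ss (Suc n) \<le> ss n" using ss_dec[OF n] .
  have p: "ss n > 0" "ss (Suc n) > 0" using ss_pos by auto
  have c: "2*pi/(real n+1) \<ge> 0" by simp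
  have "(2*pi/(real n+1))^2 = ss n * ss (Suc n)" by (rule r)
  also have "\<dots> \<le> ss n * ss n" using mult_left_mono[OF d, of "ss n"] p by simp
  also have "\<dots> = ss n ^2" by (simp only: power2_eq_square)
  finally have h1: "(2*pi/(real n+1))^2 \<le> ss n ^2" .
  show "2*pi/(real n+1) \<le> ss n" by (rule power2_le_imp_le[OF h1]) (use p in auto)
  have "ss (Suc n)^2 = ss (Suc n) * ss (Suc n)" by (simp only: power2_eq_square)
  also have "\<dots> \<le> ss n * ss (Suc n)" using mult_right_mono[OF d, of "ss (Suc n)"] p by simp
  also have "\<dots> = (2*pi/(real n+1))^2" by (rule r[symmetric])
  finally have h2: "ss (Suc n)^2 \<le> (2*pi/(real n+1))^2" .
  show "ss (Suc n) \<le> 2*pi/(real n+1)" by (rule power2_le_imp_le[OF h2 c])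
qed

lemma ss_lim: "(\<lambda>n. ss n * real n) \<longlonglongrightarrow> 2*pi"
proof (rule tendsto_sandwich[of "\<lambda>n. 2*pi*real n/(real n+1)" _ _ "\<lambda>n. 2*pi"])
  show "\<forall>\<^sub>F n in sequentially. 2*pi*real n/(real n+1) \<le> ss n * real n"
    using eventually_ge_at_top[of 1]
  proof eventually_elim
    case (elim n)
    have "2*pi/(real n+1) * real n \<le> ss n * real n"
      by (rule mult_right_mono[OF ss_bounds(1)[OF elim]]) simp
    thus ?case by simp
  qed
  show "\<forall>\<^sub>F n in sequentially. ss n * real n \<le> 2*pi"
    using eventually_ge_at_top[of 2]
  proof eventually_elim
    case (elim n)
    hence "ss (Suc (n-1)) \<le> 2*pi/(real (n-1)+1)" by (intro ss_bounds(2)) auto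
    hence "ss n \<le> 2*pi/real n" using elim by (simp add: of_nat_diff)
    thus ?case using elim by (simp add: divide_simps)
  qed
  show "(\<lambda>n. 2*pi*real n/(real n+1)) \<longlonglongrightarrow> 2*pi" by real_asymp
  show "(\<lambda>n. 2*pi) \<longlonglongrightarrow> 2*pi" by simp
qed

lemma ratio_lim:
  assumes "(\<lambda>n. A n * real n) \<longlonglongrightarrow> 2*pi"
  shows "(\<lambda>n. ss n / A n) \<longlonglongrightarrow> 1"
proof -
  have "(\<lambda>n. (ss n * real n) / (A n * real n)) \<longlonglongrightarrow> (2*pi)/(2*pi)"
    by (rule tendsto_divide[OF ss_lim assms]) simp
  hence l: "(\<lambda>n. (ss n * real n) / (A n * real n)) \<longlonglongrightarrow> 1" by simp
  show ?thesis
  proof (rule Lim_transform_eventually[OF l])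
    show "\<forall>\<^sub>F n in sequentially. ss n * real n / (A n * real n) = ss n / A n"
      using eventually_ge_at_top[of 1] by eventually_elim simp
  qed
qed

lemma tele_lower:
  fixes s A :: "nat \<Rightarrow> real"
  assumes spos: "\<And>n. n \<ge> N \<Longrightarrow> s n > 0" and Apos: "\<And>n. n \<ge> N \<Longrightarrow> A n > 0"
    and rec: "\<And>n. n \<ge> N \<Longrightarrow> s n * s (Suc n) = (K/(real n+1))^2"
    and mono: "\<And>n. n \<ge> N \<Longrightarrow> (real n+1)^2 * A n < (real n+2)^2 * A (n+2)"
    and lim: "(\<lambda>n. s n / A n) \<longlonglongrightarrow> 1"
    and n: "n \<ge> N"
  shows "A n < s n"
proof -
  have step: "s (m+2) / A (m+2) < s m / A m" if m: "m \<ge> N" for m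
  proof -
    have r1: "s m * s (Suc m) = (K/(real m+1))^2" using rec m .
    have r2: "s (Suc m) * s (Suc (Suc m)) = (K/(real m+2))^2" using rec[of "Suc m"] m by (simp add: add.commute)
    have p: "s m > 0" "s (Suc m) > 0" "s (m+2) > 0" "A m > 0" "A (m+2) > 0" using spos Apos m by auto
    have "s m * (real m+1)^2 * s (Suc m) = s (m+2) * (real m+2)^2 * s (Suc m)"
    proof -
      have "s m * (real m+1)^2 * s (Suc m) = (real m+1)^2 * (K/(real m+1))^2" using r1 by (simp add: algebra_simps)
      also have "\<dots> = K^2" by (simp add: power_divide)
      also have "\<dots> = (real m+2)^2 * (K/(real m+2))^2" by (simp add: power_divide)
      also have "\<dots> = s (m+2) * (real m+2)^2 * s (Suc m)" using r2 by (simp add: algebra_simps)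
      finally show ?thesis .
    qed
    hence e: "s m * (real m+1)^2 = s (m+2) * (real m+2)^2" using p by simp
    have "s (m+2) * (real m+2)^2 * A m = s m * ((real m+1)^2 * A m)" using e by (simp add: algebra_simps)
    also have "\<dots> < s m * ((real m+2)^2 * A (m+2))" using mono[OF m] p by simp
    finally have "s (m+2) * A m < s m * A (m+2)" by (simp add: algebra_simps)
    thus ?thesis using p by (simp add: divide_simps)
  qed
  define f where "f k = s (n + 2*k) / A (n + 2*k)" for k
  have dec: "decseq f" unfolding decseq_Suc_iff
  proof
    fix k have "s (n+2*k+2) / A (n+2*k+2) < s (n+2*k) / A (n+2*k)" using step[of "n+2*k"] n by simp
    thus "f (Suc k) \<le> f k" unfolding f_def by (simp add: add.assoc)
  qed
  have sm: "strict_mono (\<lambda>k. n + 2*k)" by (rule strict_monoI) simp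
  have "((\<lambda>n. s n / A n) \<circ> (\<lambda>k. n + 2*k)) \<longlonglongrightarrow> 1" by (rule LIMSEQ_subseq_LIMSEQ[OF lim sm])
  hence fl: "f \<longlonglongrightarrow> 1" unfolding f_def comp_def by simp
  have "1 \<le> f 1" by (rule decseq_ge[OF dec fl])
  also have "f 1 < s n / A n" using step[OF n] unfolding f_def by simp
  finally show ?thesis using Apos[OF n] by (simp add: divide_simps)
qed

lemma tele_upper:
  fixes s A :: "nat \<Rightarrow> real"
  assumes spos: "\<And>n. n \<ge> N \<Longrightarrow> s n > 0" and Apos: "\<And>n. n \<ge> N \<Longrightarrow> A n > 0"
    and rec: "\<And>n. n \<ge> N \<Longrightarrow> s n * s (Suc n) = (K/(real n+1))^2"
    and mono: "\<And>n. n \<ge> N \<Longrightarrow> (real n+2)^2 * A (n+2) < (real n+1)^2 * A n"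
    and lim: "(\<lambda>n. s n / A n) \<longlonglongrightarrow> 1"
    and n: "n \<ge> N"
  shows "s n < A n"
proof -
  have step: "s m / A m < s (m+2) / A (m+2)" if m: "m \<ge> N" for m
  proof -
    have r1: "s m * s (Suc m) = (K/(real m+1))^2" using rec m .
    have r2: "s (Suc m) * s (Suc (Suc m)) = (K/(real m+2))^2" using rec[of "Suc m"] m by (simp add: add.commute)
    have p: "s m > 0" "s (Suc m) > 0" "s (m+2) > 0" "A m > 0" "A (m+2) > 0" using spos Apos m by auto
    have "s m * (real m+1)^2 * s (Suc m) = s (m+2) * (real m+2)^2 * s (Suc m)"
    proof -
      have "s m * (real m+1)^2 * s (Suc m) = (real m+1)^2 * (K/(real m+1))^2" using r1 by (simp add: algebra_simps)
      also have "\<dots> = K^2" by (simp add: power_divide)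
      also have "\<dots> = (real m+2)^2 * (K/(real m+2))^2" by (simp add: power_divide)
      also have "\<dots> = s (m+2) * (real m+2)^2 * s (Suc m)" using r2 by (simp add: algebra_simps)
      finally show ?thesis .
    qed
    hence e: "s m * (real m+1)^2 = s (m+2) * (real m+2)^2" using p by simp
    have "s m * ((real m+2)^2 * A (m+2)) < s m * ((real m+1)^2 * A m)" using mono[OF m] p by simp
    also have "\<dots> = s (m+2) * (real m+2)^2 * A m" using e by (simp add: algebra_simps)
    finally have "s m * A (m+2) < s (m+2) * A m" using p by (simp add: algebra_simps)
    thus ?thesis using p by (simp add: divide_simps)
  qed
  define f where "f k = s (n + 2*k) / A (n + 2*k)" for k
  have inc: "incseq f" unfolding incseq_Suc_iff
  proof
    fix k have "s (n+2*k) / A (n+2*k) < s (n+2*k+2) / A (n+2*k+2)" using step[of "n+2*k"] n by simp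
    thus "f k \<le> f (Suc k)" unfolding f_def by (simp add: add.assoc)
  qed
  have sm: "strict_mono (\<lambda>k. n + 2*k)" by (rule strict_monoI) simp
  have "((\<lambda>n. s n / A n) \<circ> (\<lambda>k. n + 2*k)) \<longlonglongrightarrow> 1" by (rule LIMSEQ_subseq_LIMSEQ[OF lim sm])
  hence fl: "f \<longlonglongrightarrow> 1" unfolding f_def comp_def by simp
  have "s n / A n < f 1" using step[OF n] unfolding f_def by simp
  also have "f 1 \<le> 1" by (rule incseq_le[OF inc fl])
  finally show ?thesis using Apos[OF n] by (simp add: divide_simps)
qed
definition AA :: "nat \<Rightarrow> real" where
  "AA n = (2*pi/(real n + 4*pi + 1/2) + eps1 n) * ((real n+1+2*pi)/(real n+1))^2"
definition BB :: "nat \<Rightarrow> real" where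
  "BB n = (2*pi/(real n + 4*pi + 1/2) + eps2 n) * ((real n+1+2*pi)/(real n+1))^2"

lemma L_eq: "m > 0 \<Longrightarrow> 2*pi/(real m + 4*pi + 1/2) + eps1 m = numL pi (real m) / denL pi (real m)"
proof -
  assume m: "m > 0"
  have X: "real m + 4*pi + 1/2 \<noteq> 0" using pi_gt_zero of_nat_0_le_iff[of m] by linarith
  have M: "real m ^ 3 \<noteq> 0" using m by simp
  show ?thesis using X M unfolding eps1_def numL_def denL_def
    by (simp add: divide_simps) algebra
qed
lemma U_eq: "m > 0 \<Longrightarrow> 2*pi/(real m + 4*pi + 1/2) + eps2 m = numU pi (real m) / denU pi (real m)"
proof -
  assume m: "m > 0"
  have X: "real m + 4*pi + 1/2 \<noteq> 0" using pi_gt_zero of_nat_0_le_iff[of m] by linarith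
  have M: "real m ^ 3 \<noteq> 0" "real m ^ 4 \<noteq> 0" using m by simp_all
  show ?thesis using X M unfolding eps2_def eps1_def numU_def denU_def
    by (simp add: divide_simps) algebra
qed
lemma pi_lo: "314159/100000 \<le> pi" by (rule order_trans[OF _ pi_approx(1)]) simp
lemma pi_hi: "pi \<le> 31416/10000" by (rule order_trans[OF pi_approx(2)]) simp

lemma denL_pos: "m > 0 \<Longrightarrow> denL pi m > 0"
  unfolding denL_def using pi_gt_zero by (intro mult_pos_pos add_pos_pos zero_less_power) auto
lemma denU_pos: "m > 0 \<Longrightarrow> denU pi m > 0"
  unfolding denU_def using pi_gt_zero by (intro mult_pos_pos add_pos_pos zero_less_power) auto

lemma aux_e1: "(x::real) \<noteq> 0 \<Longrightarrow> x^2 * (N/D * (y/x)^2) = N*y^2/D"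
  by (simp add: power_divide field_simps)
lemma aux_e2: "(x::real) \<noteq> 0 \<Longrightarrow> z^2 * (N/D * (y/x)^2) = N*y^2*z^2/(D*x^2)"
  by (simp add: power_divide field_simps)

lemma frac_lt: "(0::real) < b \<Longrightarrow> 0 < d \<Longrightarrow> a*d < c*b \<Longrightarrow> a/b < c/d"
  by (simp add: divide_simps)

lemma AA_pos: "n \<ge> 10 \<Longrightarrow> AA n > 0"
proof -
  assume n: "n \<ge> 10"
  have n0: "0 < n" using n by simp
  have a: "numL pi (real n) > 0" by (rule numL_pos) (use n pi_lo pi_hi in auto)
  have b: "denL pi (real n) > 0" using n by (intro denL_pos) auto
  have c: "(real n+1+2*pi)/(real n+1) > 0" using pi_gt_zero n0 by (intro divide_pos_pos add_pos_pos) auto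
  have "AA n = numL pi (real n) / denL pi (real n) * ((real n+1+2*pi)/(real n+1))^2"
    unfolding AA_def L_eq[OF n0] ..
  moreover have "0 < numL pi (real n) / denL pi (real n) * ((real n+1+2*pi)/(real n+1))^2"
    by (intro mult_pos_pos divide_pos_pos a b zero_less_power[OF c])
  ultimately show ?thesis by simp
qed

lemma BB_pos: "n \<ge> 1 \<Longrightarrow> BB n > 0"
proof -
  assume n: "n \<ge> 1"
  have n0: "0 < n" using n by simp
  have a: "numU pi (real n) > 0" by (rule numU_pos) (use n pi_lo pi_hi in auto)
  have b: "denU pi (real n) > 0" using n by (intro denU_pos) auto
  have c: "(real n+1+2*pi)/(real n+1) > 0" using pi_gt_zero n0 by (intro divide_pos_pos add_pos_pos) auto
  have "BB n = numU pi (real n) / denU pi (real n) * ((real n+1+2*pi)/(real n+1))^2"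
    unfolding BB_def U_eq[OF n0] ..
  moreover have "0 < numU pi (real n) / denU pi (real n) * ((real n+1+2*pi)/(real n+1))^2"
    by (intro mult_pos_pos divide_pos_pos a b zero_less_power[OF c])
  ultimately show ?thesis by simp
qed

lemma AA_mono: assumes n: "n \<ge> 10" shows "(real n+1)^2 * AA n < (real n+2)^2 * AA (n+2)"
proof -
  define m where "m = real n"
  have m: "m \<ge> 10" using n unfolding m_def by simp
  have d1: "denL pi m > 0" "denL pi (m+2) > 0" using m by (auto intro!: denL_pos)
  have q1: "2*pi/(real n + 4*pi + 1/2) + eps1 n = numL pi m / denL pi m"
    using L_eq[of n] n unfolding m_def by simp
  have q2: "2*pi/(real (n+2) + 4*pi + 1/2) + eps1 (n+2) = numL pi (m+2) / denL pi (m+2)"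
    using L_eq[of "n+2"] unfolding m_def by (simp add: add.commute)
  have x1: "real n + 1 \<noteq> 0" "real (n+2) + 1 \<noteq> 0" by simp_all
  have e1: "(real n+1)^2 * AA n = numL pi m * (m+1+2*pi)^2 / denL pi m"
    unfolding AA_def q1 aux_e1[OF x1(1)] m_def ..
  have e2: "(real n+2)^2 * AA (n+2) = numL pi (m+2) * (m+3+2*pi)^2 * (m+2)^2 / (denL pi (m+2) * (m+3)^2)"
  proof -
    have "(real n+2)^2 * AA (n+2) = numL pi (m+2) * (real (n+2)+1+2*pi)^2 * (real n+2)^2 / (denL pi (m+2) * (real (n+2)+1)^2)"
      unfolding AA_def q2 aux_e2[OF x1(2)] ..
    also have "\<dots> = numL pi (m+2) * (m+3+2*pi)^2 * (m+2)^2 / (denL pi (m+2) * (m+3)^2)"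
      unfolding m_def by (simp add: algebra_simps)
    finally show ?thesis .
  qed
  have c: "0 < numL pi (m+2)*denL pi m*(m+3+2*pi)^2*(m+2)^2 - numL pi m*denL pi (m+2)*(m+1+2*pi)^2*(m+3)^2"
    by (rule condL) (use m pi_lo pi_hi in auto)
  show ?thesis unfolding e1 e2
    by (rule frac_lt) (use d1 m c in \<open>auto simp: algebra_simps\<close>)
qed

lemma BB_mono: assumes n: "n \<ge> 1" shows "(real n+2)^2 * BB (n+2) < (real n+1)^2 * BB n"
proof -
  define m where "m = real n"
  have m: "m \<ge> 1" using n unfolding m_def by simp
  have d1: "denU pi m > 0" "denU pi (m+2) > 0" using m by (auto intro!: denU_pos)
  have q1: "2*pi/(real n + 4*pi + 1/2) + eps2 n = numU pi m / denU pi m"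
    using U_eq[of n] n unfolding m_def by simp
  have q2: "2*pi/(real (n+2) + 4*pi + 1/2) + eps2 (n+2) = numU pi (m+2) / denU pi (m+2)"
    using U_eq[of "n+2"] unfolding m_def by (simp add: add.commute)
  have x1: "real n + 1 \<noteq> 0" "real (n+2) + 1 \<noteq> 0" by simp_all
  have e1: "(real n+1)^2 * BB n = numU pi m * (m+1+2*pi)^2 / denU pi m"
    unfolding BB_def q1 aux_e1[OF x1(1)] m_def ..
  have e2: "(real n+2)^2 * BB (n+2) = numU pi (m+2) * (m+3+2*pi)^2 * (m+2)^2 / (denU pi (m+2) * (m+3)^2)"
  proof -
    have "(real n+2)^2 * BB (n+2) = numU pi (m+2) * (real (n+2)+1+2*pi)^2 * (real n+2)^2 / (denU pi (m+2) * (real (n+2)+1)^2)"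
      unfolding BB_def q2 aux_e2[OF x1(2)] ..
    also have "\<dots> = numU pi (m+2) * (m+3+2*pi)^2 * (m+2)^2 / (denU pi (m+2) * (m+3)^2)"
      unfolding m_def by (simp add: algebra_simps)
    finally show ?thesis .
  qed
  have c: "numU pi (m+2)*denU pi m*(m+3+2*pi)^2*(m+2)^2 - numU pi m*denU pi (m+2)*(m+1+2*pi)^2*(m+3)^2 < 0"
    by (rule condU) (use m pi_lo pi_hi in auto)
  show ?thesis unfolding e1 e2
    by (rule frac_lt) (use d1 m c in \<open>auto simp: algebra_simps\<close>)
qed

lemma AA_lim: "(\<lambda>n. AA n * real n) \<longlonglongrightarrow> 2*pi"
  unfolding AA_def eps1_def by real_asymp

lemma BB_lim: "(\<lambda>n. BB n * real n) \<longlonglongrightarrow> 2*pi"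
  unfolding BB_def eps2_def eps1_def by real_asymp

lemma ss_gt_AA: assumes "n \<ge> 10" shows "AA n < ss n"
proof (rule tele_lower[where N=10 and K="2*pi" and s=ss and A=AA])
  show "\<And>m. 10 \<le> m \<Longrightarrow> 0 < ss m" using ss_pos by simp
  show "\<And>m. 10 \<le> m \<Longrightarrow> 0 < AA m" by (rule AA_pos)
  show "\<And>m. 10 \<le> m \<Longrightarrow> ss m * ss (Suc m) = (2*pi/(real m+1))^2" by (rule ss_rec) simp
  show "\<And>m. 10 \<le> m \<Longrightarrow> (real m+1)^2 * AA m < (real m+2)^2 * AA (m+2)" by (rule AA_mono)
  show "(\<lambda>n. ss n / AA n) \<longlonglongrightarrow> 1" by (rule ratio_lim[OF AA_lim])
  show "10 \<le> n" by (rule assms)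
qed

lemma ss_lt_BB: assumes "n \<ge> 1" shows "ss n < BB n"
proof (rule tele_upper[where N=1 and K="2*pi" and s=ss and A=BB])
  show "\<And>m. 1 \<le> m \<Longrightarrow> 0 < ss m" using ss_pos by simp
  show "\<And>m. 1 \<le> m \<Longrightarrow> 0 < BB m" by (rule BB_pos)
  show "\<And>m. 1 \<le> m \<Longrightarrow> ss m * ss (Suc m) = (2*pi/(real m+1))^2" by (rule ss_rec)
  show "\<And>m. 1 \<le> m \<Longrightarrow> (real m+2)^2 * BB (m+2) < (real m+1)^2 * BB m" by (rule BB_mono)
  show "(\<lambda>n. ss n / BB n) \<longlonglongrightarrow> 1" by (rule ratio_lim[OF BB_lim])
  show "1 \<le> n" by (rule assms)
qed
theorem theorem12:
  fixes n :: nat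
  assumes "n \<ge> 1"
  shows "sqrt (2 * pi / (real n + 4 * pi + 1/2) + eps1 n)
           < Omega n / (Omega (n - 1) + Omega (n + 1))
       \<and> Omega n / (Omega (n - 1) + Omega (n + 1))
           < sqrt (2 * pi / (real n + 4 * pi + 1/2) + eps2 n)"
proof -
  have n: "n \<ge> 1" using assms .
  define V where "V = Omega n / (Omega (n - 1) + Omega (n + 1))"
  define q where "q = (real n+1)/(real n+1+2*pi)"
  have p: "Omega n > 0" "Omega (n-1) > 0" using Omega_pos by auto
  have q0: "q > 0" unfolding q_def using pi_gt_zero by (intro divide_pos_pos) linarith+
  have V_eq: "V = Omega n / Omega (n-1) * q"
    unfolding V_def q_def Omega_succ[OF n] using p pi_gt_zero
    by (simp add: field_simps)
  have V0: "V > 0" unfolding V_eq using p q0 by simp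
  have V2: "V^2 = ss n * q^2" unfolding V_eq ss_def by (simp only: power_mult_distrib)
  have h1: "real n+1+2*pi \<noteq> 0" using pi_gt_zero of_nat_0_le_iff[of n] by linarith
  have h2: "real n+1 \<noteq> 0" using of_nat_0_le_iff[of n] by linarith
  have qq1: "((real n+1+2*pi)/(real n+1)) * q = 1" unfolding q_def using h1 h2 by simp
  have qq: "((real n+1+2*pi)/(real n+1))^2 * q^2 = 1"
    using qq1 by (simp add: power_mult_distrib[symmetric])
  have lower: "sqrt (2 * pi / (real n + 4 * pi + 1/2) + eps1 n) < V"
  proof (cases "n \<ge> 10")
    case True
    have "AA n < ss n" using ss_gt_AA[OF True] .
    hence "AA n * q^2 < ss n * q^2" using q0 by simp
    also have "AA n * q^2 = 2 * pi / (real n + 4 * pi + 1/2) + eps1 n"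
      unfolding AA_def using qq by (simp add: mult.assoc)
    finally have "2 * pi / (real n + 4 * pi + 1/2) + eps1 n < V^2" unfolding V2 .
    hence "sqrt (2 * pi / (real n + 4 * pi + 1/2) + eps1 n) < sqrt (V^2)" by (rule real_sqrt_less_mono)
    thus ?thesis using V0 by simp
  next
    case False
    hence k: "n \<le> 9" by simp
    have "numL pi (real n) < 0" by (rule numL_small) (use n k pi_lo pi_hi in auto)
    moreover have "denL pi (real n) > 0" using n by (intro denL_pos) auto
    ultimately have "2 * pi / (real n + 4 * pi + 1/2) + eps1 n < 0"
      using L_eq[of n] n by (simp add: divide_neg_pos)
    hence "sqrt (2 * pi / (real n + 4 * pi + 1/2) + eps1 n) < 0" by simp
    thus ?thesis using V0 by linarith
  qed
  have upper: "V < sqrt (2 * pi / (real n + 4 * pi + 1/2) + eps2 n)"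
  proof -
    have "ss n < BB n" using ss_lt_BB[OF n] .
    hence "ss n * q^2 < BB n * q^2" using q0 by simp
    also have "BB n * q^2 = 2 * pi / (real n + 4 * pi + 1/2) + eps2 n"
      unfolding BB_def using qq by (simp add: mult.assoc)
    finally have "V^2 < 2 * pi / (real n + 4 * pi + 1/2) + eps2 n" unfolding V2 .
    hence "sqrt (V^2) < sqrt (2 * pi / (real n + 4 * pi + 1/2) + eps2 n)" by (rule real_sqrt_less_mono)
    thus ?thesis using V0 by simp
  qed
  show ?thesis using lower upper unfolding V_def by simp
qed
end
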